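(* Let $\varphi:\mathbb{R}\to\mathbb{R}$ be a positive definite function with $\varphi(0)=1$ and $|\varphi(x)|<1$ for $x\neq 0$, and let $(X(u,t))_{u\in\mathbb{R},t\ge 0}$ be the point motion of a Harris flow with infinitesimal covariation function $\varphi$. Then, almost surely, \[ \limsup_{t\to 0}\ \sup_{u\in[0,1]}\frac{|X(u,t)-u|}{\sqrt{t\ln t^{-1}}}\le 1 . \]
   Context: The point motion of a Harris flow with infinitesimal covariation function $\varphi$ is a family $(X(u,t))_{u\in\mathbb{R},t\ge0}$ of continuous martingales adapted to a common filtration $(\mathcal{F}_t)$ such that: (1) for each $u$, $X(u,\cdot)$ is an $(\mathcal{F}_t)$-Brownian motion started at $u$; (2) for all $u,v$, $\frac{d}{dt}\langle X(u,t),X(v,t)\rangle=\varphi(X(u,t)-X(v,t))$, where $\langle\cdot,\cdot\rangle$ denotes quadratic covariation; (3) for each $t$, $u\mapsto X(u,t)$ is nondecreasing. The modification of $X$ used is separable and continuous in $t$ for each $u$. *)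

theory Defs
  imports "HOL-Probability.Probability"
begin

definition filtration :: "'a measure \<Rightarrow> (real \<Rightarrow> 'a measure) \<Rightarrow> bool" where
  "filtration M F \<longleftrightarrow> (\<forall>t. subalgebra M (F t)) \<and>
     (\<forall>s t. 0 \<le> s \<longrightarrow> s \<le> t \<longrightarrow> sets (F s) \<subseteq> sets (F t))"

definition martingale :: "'a measure \<Rightarrow> (real \<Rightarrow> 'a measure) \<Rightarrow> (real \<Rightarrow> 'a \<Rightarrow> real) \<Rightarrow> bool" where
  "martingale M F Z \<longleftrightarrow>
     (\<forall>t\<ge>0. Z t \<in> borel_measurable (F t) \<and> integrable M (Z t)) \<and>
     (\<forall>s t A. 0 \<le> s \<longrightarrow> s \<le> t \<longrightarrow> A \<in> sets (F s) \<longrightarrow>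
        (LINT \<omega>:A|M. Z t \<omega>) = (LINT \<omega>:A|M. Z s \<omega>))"

definition brownian_motion_from ::
  "'a measure \<Rightarrow> (real \<Rightarrow> 'a measure) \<Rightarrow> (real \<Rightarrow> 'a \<Rightarrow> real) \<Rightarrow> real \<Rightarrow> bool" where
  "brownian_motion_from M F B u \<longleftrightarrow>
     (\<forall>t\<ge>0. B t \<in> borel_measurable (F t)) \<and>
     (AE \<omega> in M. B 0 \<omega> = u) \<and>
     (AE \<omega> in M. continuous_on {0..} (\<lambda>t. B t \<omega>)) \<and>
     (\<forall>s t A C. 0 \<le> s \<longrightarrow> s < t \<longrightarrow> A \<in> sets (F s) \<longrightarrow> C \<in> sets borel \<longrightarrow>
        measure M (A \<inter> {\<omega> \<in> space M. B t \<omega> - B s \<omega> \<in> C}) =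
        measure M A * measure (density lborel (normal_density 0 (sqrt (t - s)))) C)"

definition positive_definite :: "(real \<Rightarrow> real) \<Rightarrow> bool" where
  "positive_definite \<phi> \<longleftrightarrow>
     (\<forall>(n::nat) (x::nat \<Rightarrow> real) (c::nat \<Rightarrow> complex).
        let S = (\<Sum>i<n. \<Sum>j<n. c i * cnj (c j) * complex_of_real (\<phi> (x i - x j)))
        in Im S = 0 \<and> Re S \<ge> 0)"

definition separable_process :: "'a measure \<Rightarrow> (real \<Rightarrow> real \<Rightarrow> 'a \<Rightarrow> real) \<Rightarrow> bool" where
  "separable_process M X \<longleftrightarrow>
     (\<exists>D. countable D \<and> D \<subseteq> UNIV \<times> {0..} \<and>
        (AE \<omega> in M. \<forall>u t. 0 \<le> t \<longrightarrow>
           (\<exists>f :: nat \<Rightarrow> real \<times> real. (\<forall>n. f n \<in> D) \<and> f \<longlonglongrightarrow> (u, t) \<and>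
              (\<lambda>n. X (fst (f n)) (snd (f n)) \<omega>) \<longlonglongrightarrow> X u t \<omega>)))"

text \<open>The covariation
  condition d<X(u),X(v)>_t = \<phi>(X(u,t)-X(v,t)) dt is expressed by the defining property of
  the quadratic covariation of continuous martingales: X(u,t)X(v,t) - \<integral>_0^t \<phi>(X(u,s)-X(v,s)) ds
  is a martingale.\<close>
definition harris_point_motion ::
  "'a measure \<Rightarrow> (real \<Rightarrow> 'a measure) \<Rightarrow> (real \<Rightarrow> real) \<Rightarrow> (real \<Rightarrow> real \<Rightarrow> 'a \<Rightarrow> real) \<Rightarrow> bool" where
  "harris_point_motion M F \<phi> X \<longleftrightarrow>
     filtration M F \<and>
     (\<forall>u. brownian_motion_from M F (X u) u) \<and>
     (\<forall>u. martingale M F (X u)) \<and>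
     (\<forall>u v. martingale M F
        (\<lambda>t \<omega>. X u t \<omega> * X v t \<omega> - (LINT s:{0..t}|lborel. \<phi> (X u s \<omega> - X v s \<omega>)))) \<and>
     (\<forall>t\<ge>0. \<forall>\<omega>\<in>space M. mono (\<lambda>u. X u t \<omega>)) \<and>
     separable_process M X"

end

theory Submission
  imports Defs
begin


lemma nn_normal_one:
  assumes "0 < \<sigma>"
  shows "(\<integral>\<^sup>+x. ennreal (normal_density \<mu> \<sigma> x) \<partial>lborel) = 1"
  using assms by (simp add: nn_integral_eq_integral)

lemma normal_exp_shift:
  assumes "0 < \<sigma>"
  shows "normal_density 0 \<sigma> x * exp (l * x) = exp (l^2 * \<sigma>^2 / 2) * normal_density (l * \<sigma>^2) \<sigma> x"
proof -
  have "-(x - 0)\<^sup>2/ (2 * \<sigma>\<^sup>2) + l * x = l^2 * \<sigma>^2 / 2 + (-(x - l * \<sigma>^2)\<^sup>2/ (2 * \<sigma>\<^sup>2))"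
    using assms by (simp add: field_simps power2_eq_square)
  then show ?thesis unfolding normal_density_def
    by (simp add: exp_add[symmetric] mult_ac)
qed

lemma normal_tail:
  assumes "0 < \<sigma>" "0 \<le> b"
  shows "measure (density lborel (normal_density 0 \<sigma>)) {x. \<bar>x\<bar> > b} \<le> 2 * exp (- (b^2) / (2 * \<sigma>^2))"
proof -
  define l where "l = b / \<sigma>^2"
  have l0: "0 \<le> l" using assms by (simp add: l_def)
  have ind: "indicator {x. \<bar>x\<bar> > b} x \<le> exp (l * x - l * b) + exp ((-l) * x - l * b)" for x :: real
  proof (cases "\<bar>x\<bar> > b")
    case True
    then have "x > b \<or> -x > b" by auto
    moreover have "x > b \<Longrightarrow> 0 \<le> l * x - l * b" using l0
      by (metis diff_ge_0_iff_ge less_eq_real_def mult_left_mono)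
    moreover have "-x > b \<Longrightarrow> 0 \<le> (-l) * x - l * b" using l0
      by (metis diff_ge_0_iff_ge less_eq_real_def mult_left_mono mult_minus_left mult_minus_right)
    ultimately have "1 \<le> exp (l * x - l * b) \<or> 1 \<le> exp ((-l) * x - l * b)"
      by auto
    then show ?thesis using True by (auto intro: add_increasing add_increasing2)
  qed (auto intro: add_nonneg_nonneg)
  have "emeasure (density lborel (normal_density 0 \<sigma>)) {x. \<bar>x\<bar> > b}
     = (\<integral>\<^sup>+x. ennreal (normal_density 0 \<sigma> x) * indicator {x. \<bar>x\<bar> > b} x \<partial>lborel)"
    by (subst emeasure_density) auto
  also have "\<dots> \<le> (\<integral>\<^sup>+x. ennreal (exp (- l * b) * exp (l^2 * \<sigma>^2 / 2) * normal_density (l * \<sigma>^2) \<sigma> x)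
        + ennreal (exp (- l * b) * exp ((-l)^2 * \<sigma>^2 / 2) * normal_density ((-l) * \<sigma>^2) \<sigma> x) \<partial>lborel)"
  proof (rule nn_integral_mono)
    fix x :: real
    have "normal_density 0 \<sigma> x * indicator {x. \<bar>x\<bar> > b} x \<le>
        normal_density 0 \<sigma> x * (exp (l * x - l * b) + exp ((-l) * x - l * b))"
      by (intro mult_left_mono ind) auto
    also have "\<dots> = exp (- l * b) * (normal_density 0 \<sigma> x * exp (l * x)) + exp (- l * b) * (normal_density 0 \<sigma> x * exp ((-l) * x))"
      by (simp add: algebra_simps exp_diff exp_minus field_simps)
    also have "\<dots> = exp (- l * b) * exp (l^2 * \<sigma>^2 / 2) * normal_density (l * \<sigma>^2) \<sigma> x
        + exp (- l * b) * exp ((-l)^2 * \<sigma>^2 / 2) * normal_density ((-l) * \<sigma>^2) \<sigma> x"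
      by (simp only: normal_exp_shift[OF assms(1)] mult.assoc)
    finally have R: "normal_density 0 \<sigma> x * indicator {x. \<bar>x\<bar> > b} x \<le> exp (- l * b) * exp (l^2 * \<sigma>^2 / 2) * normal_density (l * \<sigma>^2) \<sigma> x
        + exp (- l * b) * exp ((-l)^2 * \<sigma>^2 / 2) * normal_density ((-l) * \<sigma>^2) \<sigma> x" .
    have "ennreal (normal_density 0 \<sigma> x) * indicator {x. \<bar>x\<bar> > b} x = ennreal (normal_density 0 \<sigma> x * indicator {x. \<bar>x\<bar> > b} x)"
      by (simp add: indicator_def)
    also have "\<dots> \<le> ennreal (exp (- l * b) * exp (l^2 * \<sigma>^2 / 2) * normal_density (l * \<sigma>^2) \<sigma> x
        + exp (- l * b) * exp ((-l)^2 * \<sigma>^2 / 2) * normal_density ((-l) * \<sigma>^2) \<sigma> x)"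
      using R by (rule ennreal_leI)
    also have "\<dots> = ennreal (exp (- l * b) * exp (l^2 * \<sigma>^2 / 2) * normal_density (l * \<sigma>^2) \<sigma> x)
        + ennreal (exp (- l * b) * exp ((-l)^2 * \<sigma>^2 / 2) * normal_density ((-l) * \<sigma>^2) \<sigma> x)"
      by (rule ennreal_plus) auto
    finally show "ennreal (normal_density 0 \<sigma> x) * indicator {x. \<bar>x\<bar> > b} x \<le> ennreal (exp (- l * b) * exp (l^2 * \<sigma>^2 / 2) * normal_density (l * \<sigma>^2) \<sigma> x)
        + ennreal (exp (- l * b) * exp ((-l)^2 * \<sigma>^2 / 2) * normal_density ((-l) * \<sigma>^2) \<sigma> x)" .
  qed
  also have "\<dots> = ennreal (exp (- l * b) * exp (l^2 * \<sigma>^2 / 2)) + ennreal (exp (- l * b) * exp (l^2 * \<sigma>^2 / 2))"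
    using assms(1)
    by (simp add: nn_integral_add ennreal_mult nn_integral_cmult nn_normal_one)
  also have "exp (- l * b) * exp (l^2 * \<sigma>^2 / 2) = exp (- (b^2) / (2 * \<sigma>^2))"
    using assms(1) by (simp add: l_def exp_add[symmetric] field_simps power2_eq_square)
  finally have "emeasure (density lborel (normal_density 0 \<sigma>)) {x. \<bar>x\<bar> > b} \<le> ennreal (2 * exp (- (b^2) / (2 * \<sigma>^2)))"
    by (simp add: ennreal_plus[symmetric] del: ennreal_plus)
  then show ?thesis
    by (simp add: measure_def enn2real_leI)
qed

lemma normal_half:
  assumes "0 < \<sigma>"
  shows "measure (density lborel (normal_density 0 \<sigma>)) {x. x \<ge> 0} \<ge> 1/2"
    "measure (density lborel (normal_density 0 \<sigma>)) {x. x \<le> 0} \<ge> 1/2"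
proof -
  let ?N = "density lborel (normal_density 0 \<sigma>)"
  interpret prob_space ?N by (rule prob_space_normal_density[OF assms])
  have sym: "normal_density 0 \<sigma> (-x) = normal_density 0 \<sigma> x" for x
    by (simp add: normal_density_def)
  have "emeasure ?N {x. x \<le> 0} = (\<integral>\<^sup>+x. ennreal (normal_density 0 \<sigma> x) * indicator {x. x \<le> 0} x \<partial>lborel)"
    by (subst emeasure_density) auto
  also have "\<dots> = (\<integral>\<^sup>+x. ennreal (normal_density 0 \<sigma> (0 + (-1) * x)) * indicator {x. x \<le> 0} (0 + (-1) * x) \<partial>lborel)"
    by (subst nn_integral_real_affine[where c="-1" and t=0]) auto
  also have "\<dots> = (\<integral>\<^sup>+x. ennreal (normal_density 0 \<sigma> x) * indicator {x. x \<ge> 0} x \<partial>lborel)"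
    by (intro nn_integral_cong) (simp add: sym indicator_def)
  also have "\<dots> = emeasure ?N {x. x \<ge> 0}"
    by (subst emeasure_density) auto
  finally have eq: "prob {x. x \<le> 0} = prob {x. x \<ge> 0}"
    by (simp add: measure_def)
  have "1 = prob UNIV" using prob_space by (simp add: space_density)
  also have "\<dots> \<le> prob {x. x \<le> 0} + prob {x::real. x \<ge> 0}"
    by (rule order_trans[OF _ measure_Un_le]) (auto intro: finite_measure_mono simp: sets_density)
  finally show "prob {x. x \<ge> 0} \<ge> 1/2" "prob {x. x \<le> 0} \<ge> 1/2" using eq by auto
qed



lemma levy_abstract:
  fixes M :: "'a measure" and G :: "nat \<Rightarrow> 'a measure" and Y :: "nat \<Rightarrow> 'a \<Rightarrow> real"
  assumes P: "prob_space M"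
    and sub: "\<And>k. subalgebra M (G k)"
    and meas: "\<And>j k. j \<le> k \<Longrightarrow> k \<le> n \<Longrightarrow> Y j \<in> borel_measurable (G k)"
    and halfp: "\<And>k A. k < n \<Longrightarrow> A \<in> sets (G k) \<Longrightarrow>
        measure M (A \<inter> {\<omega>\<in>space M. Y n \<omega> - Y k \<omega> \<ge> 0}) \<ge> measure M A / 2"
    and halfm: "\<And>k A. k < n \<Longrightarrow> A \<in> sets (G k) \<Longrightarrow>
        measure M (A \<inter> {\<omega>\<in>space M. Y n \<omega> - Y k \<omega> \<le> 0}) \<ge> measure M A / 2"
    and b: "0 \<le> b"
  shows "measure M {\<omega>\<in>space M. \<exists>k\<le>n. \<bar>Y k \<omega>\<bar> > b} \<le> 2 * measure M {\<omega>\<in>space M. \<bar>Y n \<omega>\<bar> > b}"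
proof -
  interpret prob_space M by (rule P)
  have measM: "Y j \<in> borel_measurable M" if "j \<le> n" for j
    using measurable_from_subalg[OF sub meas[OF that order.refl]] .
  define E where "E k = {\<omega>\<in>space M. \<bar>Y k \<omega>\<bar> > b \<and> (\<forall>j<k. \<bar>Y j \<omega>\<bar> \<le> b)}" for k
  define Ep where "Ep k = {\<omega>\<in>space M. Y k \<omega> > b \<and> (\<forall>j<k. \<bar>Y j \<omega>\<bar> \<le> b)}" for k
  define Em where "Em k = {\<omega>\<in>space M. Y k \<omega> < -b \<and> (\<forall>j<k. \<bar>Y j \<omega>\<bar> \<le> b)}" for k
  have spG: "space (G k) = space M" for k using sub[of k] by (simp add: subalgebra_def)
  have setsG: "sets (G k) \<subseteq> sets M" for k using sub[of k] by (simp add: subalgebra_def)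
  have EpG: "Ep k \<in> sets (G k)" if "k \<le> n" for k
  proof -
    have [measurable]: "Y j \<in> borel_measurable (G k)" if "j \<le> k" for j using meas that \<open>k \<le> n\<close> by auto
    have "Ep k = (\<Inter>j\<in>{..k}. {\<omega>\<in>space (G k). if j < k then \<bar>Y j \<omega>\<bar> \<le> b else Y k \<omega> > b})"
      by (auto simp: Ep_def spG split: if_splits)
    also have "\<dots> \<in> sets (G k)" by (intro sets.finite_INT) auto
    finally show ?thesis .
  qed
  have EmG: "Em k \<in> sets (G k)" if "k \<le> n" for k
  proof -
    have [measurable]: "Y j \<in> borel_measurable (G k)" if "j \<le> k" for j using meas that \<open>k \<le> n\<close> by auto
    have "Em k = (\<Inter>j\<in>{..k}. {\<omega>\<in>space (G k). if j < k then \<bar>Y j \<omega>\<bar> \<le> b else Y k \<omega> < -b})"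
      by (auto simp: Em_def spG split: if_splits)
    also have "\<dots> \<in> sets (G k)" by (intro sets.finite_INT) auto
    finally show ?thesis .
  qed
  have EpM: "Ep k \<in> sets M" and EmM: "Em k \<in> sets M" if "k \<le> n" for k
    using EpG[OF that] EmG[OF that] setsG by auto
  have E_split: "E k = Ep k \<union> Em k" for k
    by (auto simp: E_def Ep_def Em_def)
  have E_disj: "Ep k \<inter> Em k = {}" for k
    using b by (auto simp: Ep_def Em_def)
  have EM: "E k \<in> sets M" if "k \<le> n" for k using E_split EpM EmM that by auto
  define Ip where "Ip k = {\<omega>\<in>space M. Y n \<omega> - Y k \<omega> \<ge> 0}" for k
  define Im where "Im k = {\<omega>\<in>space M. Y n \<omega> - Y k \<omega> \<le> 0}" for k
  have IpM: "Ip k \<in> sets M" and ImM: "Im k \<in> sets M" if "k \<le> n" for k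
    using measM[OF that] measM[of n] unfolding Ip_def Im_def by auto
  define H where "H k = (if k < n then (Ep k \<inter> Ip k) \<union> (Em k \<inter> Im k) else E k)" for k
  have HM: "H k \<in> sets M" if "k \<le> n" for k
    using that EpM EmM IpM ImM EM by (auto simp: H_def)
  have H_ge: "measure M (H k) \<ge> measure M (E k) / 2" if "k \<le> n" for k
  proof (cases "k < n")
    case True
    have "measure M (H k) = measure M (Ep k \<inter> Ip k) + measure M (Em k \<inter> Im k)"
      unfolding H_def using True E_disj[of k] EpM[OF that] EmM[OF that] IpM[OF that] ImM[OF that]
      by (simp del: Int_iff, intro finite_measure_Union) auto
    moreover have "measure M (Ep k \<inter> Ip k) \<ge> measure M (Ep k) / 2"
      using halfp[OF True EpG] that unfolding Ip_def by auto
    moreover have "measure M (Em k \<inter> Im k) \<ge> measure M (Em k) / 2"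
      using halfm[OF True EmG] that unfolding Im_def by auto
    moreover have "measure M (E k) = measure M (Ep k) + measure M (Em k)"
      unfolding E_split using E_disj[of k] EpM[OF that] EmM[OF that]
      by (intro finite_measure_Union) auto
    ultimately show ?thesis by linarith
  next
    case False then show ?thesis by (simp add: H_def)
  qed
  have H_sub: "H k \<subseteq> {\<omega>\<in>space M. \<bar>Y n \<omega>\<bar> > b}" if "k \<le> n" for k
    using that by (auto simp: H_def E_def Ep_def Em_def Ip_def Im_def)
  have H_sub2: "H k \<subseteq> E k" for k
    by (auto simp: H_def E_split)
  have E_dj: "disjoint_family_on E {..n}"
    unfolding disjoint_family_on_def
  proof (intro ballI impI)
    fix i j assume "i \<in> {..n}" "j \<in> {..n}" "i \<noteq> j"
    then show "E i \<inter> E j = {}"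
      by (cases "i < j") (auto simp: E_def dest: not_less_iff_gr_or_eq[THEN iffD1])
  qed
  have H_dj: "disjoint_family_on H {..n}"
    using E_dj H_sub2 unfolding disjoint_family_on_def by blast
  have S_eq: "{\<omega>\<in>space M. \<exists>k\<le>n. \<bar>Y k \<omega>\<bar> > b} = (\<Union>k\<in>{..n}. E k)"
  proof
    show "(\<Union>k\<in>{..n}. E k) \<subseteq> {\<omega>\<in>space M. \<exists>k\<le>n. \<bar>Y k \<omega>\<bar> > b}"
      by (auto simp: E_def)
    show "{\<omega>\<in>space M. \<exists>k\<le>n. \<bar>Y k \<omega>\<bar> > b} \<subseteq> (\<Union>k\<in>{..n}. E k)"
    proof
      fix \<omega> assume "\<omega> \<in> {\<omega>\<in>space M. \<exists>k\<le>n. \<bar>Y k \<omega>\<bar> > b}"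
      then obtain k where k: "k \<le> n" "\<bar>Y k \<omega>\<bar> > b" "\<omega> \<in> space M" by auto
      define k0 where "k0 = (LEAST k. \<bar>Y k \<omega>\<bar> > b)"
      have "\<bar>Y k0 \<omega>\<bar> > b" unfolding k0_def by (rule LeastI[of _ k]) (rule k(2))
      moreover have "k0 \<le> k" unfolding k0_def by (rule Least_le) (rule k(2))
      moreover have "\<forall>j<k0. \<bar>Y j \<omega>\<bar> \<le> b" unfolding k0_def using not_less_Least by fastforce
      ultimately show "\<omega> \<in> (\<Union>k\<in>{..n}. E k)" using k by (auto simp: E_def intro!: bexI[of _ k0])
    qed
  qed
  have "measure M {\<omega>\<in>space M. \<exists>k\<le>n. \<bar>Y k \<omega>\<bar> > b} = (\<Sum>k\<in>{..n}. measure M (E k))"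
    unfolding S_eq using EM E_dj by (subst finite_measure_finite_Union) auto
  also have "\<dots> \<le> (\<Sum>k\<in>{..n}. 2 * measure M (H k))"
    by (intro sum_mono) (use H_ge in \<open>fastforce simp: mult.commute\<close>)
  also have "\<dots> = 2 * measure M (\<Union>k\<in>{..n}. H k)"
    using HM H_dj by (subst finite_measure_finite_Union) (auto simp: sum_distrib_left)
  also have "\<dots> \<le> 2 * measure M {\<omega>\<in>space M. \<bar>Y n \<omega>\<bar> > b}"
    using H_sub measM[of n] by (intro mult_left_mono finite_measure_mono) auto
  finally show ?thesis .
qed



lemma meas_enlarge:
  assumes "f \<in> borel_measurable A" "space A = space C" "sets A \<subseteq> sets C"
  shows "f \<in> borel_measurable C"
  using assms unfolding measurable_def by auto

lemma filt_meas:
  assumes filt: "filtration M F" and bm: "brownian_motion_from M F B u"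
    and "0 \<le> s" "s \<le> t"
  shows "B s \<in> borel_measurable (F t)"
proof -
  have "B s \<in> borel_measurable (F s)" using bm assms(3) by (simp add: brownian_motion_from_def)
  moreover have "space (F s) = space (F t)" using filt by (simp add: filtration_def subalgebra_def)
  moreover have "sets (F s) \<subseteq> sets (F t)" using filt assms(3,4) by (simp add: filtration_def)
  ultimately show ?thesis by (rule meas_enlarge)
qed

lemma bm_measM:
  assumes filt: "filtration M F" and bm: "brownian_motion_from M F B u" and "0 \<le> s"
  shows "B s \<in> borel_measurable M"
  using filt_meas[OF filt bm assms(3) order.refl] filt
  by (intro measurable_from_subalg[of M "F s"]) (auto simp: filtration_def)

lemma bm_incr:
  assumes bm: "brownian_motion_from M F B u" and "0 \<le> s" "s < t" "A \<in> sets (F s)" "C \<in> sets borel"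
  shows "measure M (A \<inter> {\<omega> \<in> space M. B t \<omega> - B s \<omega> \<in> C}) =
        measure M A * measure (density lborel (normal_density 0 (sqrt (t - s)))) C"
  using bm assms unfolding brownian_motion_from_def by blast

lemma bm_tail:
  assumes P: "prob_space M" and filt: "filtration M F" and bm: "brownian_motion_from M F B u"
    and h: "0 < h" and b: "0 \<le> b"
  shows "measure M {\<omega>\<in>space M. \<bar>B h \<omega> - B 0 \<omega>\<bar> > b} \<le> 2 * exp (- (b^2) / (2 * h))"
proof -
  interpret prob_space M by (rule P)
  have sp: "space M \<in> sets (F 0)"
    using filt by (metis filtration_def sets.top subalgebra_def)
  have "measure M {\<omega>\<in>space M. \<bar>B h \<omega> - B 0 \<omega>\<bar> > b}
      = measure M (space M \<inter> {\<omega> \<in> space M. B h \<omega> - B 0 \<omega> \<in> {x. \<bar>x\<bar> > b}})"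
    by (intro arg_cong[where f="measure M"]) auto
  also have "\<dots> = measure M (space M) * measure (density lborel (normal_density 0 (sqrt (h - 0)))) {x. \<bar>x\<bar> > b}"
    by (rule bm_incr[OF bm order.refl h sp]) auto
  also have "\<dots> \<le> 2 * exp (- (b^2) / (2 * (sqrt h)^2))"
    using normal_tail[of "sqrt h" b] h b by (simp add: prob_space)
  also have "(sqrt h)^2 = h" using h by simp
  finally show ?thesis .
qed

lemma bm_grid:
  assumes P: "prob_space M" and filt: "filtration M F" and bm: "brownian_motion_from M F B u"
    and h: "0 < h" and b: "0 \<le> b"
  shows "measure M {\<omega>\<in>space M. \<exists>k\<le>(2::nat)^j. \<bar>B (h * real k / 2^j) \<omega> - B 0 \<omega>\<bar> > b}
     \<le> 4 * exp (- (b^2) / (2 * h))"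
proof -
  interpret prob_space M by (rule P)
  define n :: nat where "n = 2^j"
  define t where "t k = h * real k / 2^j" for k
  have t0: "0 \<le> t k" for k using h by (simp add: t_def)
  have tmono: "t i \<le> t k" if "i \<le> k" for i k using h that by (simp add: t_def divide_right_mono)
  have tlt: "t k < t n" if "k < n" for k
  proof -
    have "h * real k < h * real n" using h that by simp
    then show ?thesis by (simp add: t_def n_def divide_strict_right_mono pos_divide_less_eq)
  qed
  have tn: "t n = h" by (simp add: t_def n_def)
  define Y where "Y k = (\<lambda>\<omega>. B (t k) \<omega> - B 0 \<omega>)" for k
  have lev: "measure M {\<omega>\<in>space M. \<exists>k\<le>n. \<bar>Y k \<omega>\<bar> > b} \<le> 2 * measure M {\<omega>\<in>space M. \<bar>Y n \<omega>\<bar> > b}"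
  proof (rule levy_abstract[where G="\<lambda>k. F (t k)"])
    show "prob_space M" by (rule P)
    show "subalgebra M (F (t k))" for k using filt by (simp add: filtration_def)
    show "Y i \<in> borel_measurable (F (t k))" if "i \<le> k" "k \<le> n" for i k
      unfolding Y_def using filt_meas[OF filt bm t0 tmono[OF that(1)]] filt_meas[OF filt bm order.refl t0[of k]]
      by measurable
    show "measure M (A \<inter> {\<omega>\<in>space M. Y n \<omega> - Y k \<omega> \<ge> 0}) \<ge> measure M A / 2"
      if "k < n" "A \<in> sets (F (t k))" for k A
    proof -
      have "measure M (A \<inter> {\<omega>\<in>space M. Y n \<omega> - Y k \<omega> \<ge> 0}) = measure M (A \<inter> {\<omega> \<in> space M. B (t n) \<omega> - B (t k) \<omega> \<in> {x. x \<ge> 0}})"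
        by (intro arg_cong[where f="measure M"]) (auto simp: Y_def)
      also have "\<dots> = measure M A * measure (density lborel (normal_density 0 (sqrt (t n - t k)))) {x. x \<ge> 0}"
        by (rule bm_incr[OF bm t0 tlt[OF that(1)] that(2)]) auto
      also have "\<dots> \<ge> measure M A * (1/2)"
        using normal_half(1)[of "sqrt (t n - t k)"] tlt[OF that(1)] by (intro mult_left_mono) auto
      finally show ?thesis by simp
    qed
    show "measure M (A \<inter> {\<omega>\<in>space M. Y n \<omega> - Y k \<omega> \<le> 0}) \<ge> measure M A / 2"
      if "k < n" "A \<in> sets (F (t k))" for k A
    proof -
      have "measure M (A \<inter> {\<omega>\<in>space M. Y n \<omega> - Y k \<omega> \<le> 0}) = measure M (A \<inter> {\<omega> \<in> space M. B (t n) \<omega> - B (t k) \<omega> \<in> {x. x \<le> 0}})"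
        by (intro arg_cong[where f="measure M"]) (auto simp: Y_def)
      also have "\<dots> = measure M A * measure (density lborel (normal_density 0 (sqrt (t n - t k)))) {x. x \<le> 0}"
        by (rule bm_incr[OF bm t0 tlt[OF that(1)] that(2)]) auto
      also have "\<dots> \<ge> measure M A * (1/2)"
        using normal_half(2)[of "sqrt (t n - t k)"] tlt[OF that(1)] by (intro mult_left_mono) auto
      finally show ?thesis by simp
    qed
    show "0 \<le> b" by (rule b)
  qed
  have "measure M {\<omega>\<in>space M. \<bar>Y n \<omega>\<bar> > b} \<le> 2 * exp (- (b^2) / (2 * h))"
    using bm_tail[OF P filt bm h b] by (simp add: Y_def tn)
  with lev show ?thesis by (simp add: Y_def t_def n_def)
qed



lemma dyadic_approx:
  fixes h t :: real
  assumes h: "0 < h" and t: "0 \<le> t" "t \<le> h"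
  defines "k j \<equiv> nat \<lfloor>t * 2^j / h\<rfloor>"
  shows "\<And>j. k j \<le> 2^j" and "(\<lambda>j. h * real (k j) / 2^j) \<longlonglongrightarrow> t"
proof -
  fix j :: nat
  have x0: "0 \<le> t * 2^j / h" using h t by simp
  have x1: "t * 2^j / h \<le> 2^j" using h t by (simp add: divide_le_eq mult.commute mult_left_mono)
  have "real (k j) = of_int \<lfloor>t * 2^j / h\<rfloor>" using x0 by (simp add: k_def)
  also have "\<dots> \<le> 2^j" using x1 by linarith
  finally show "k j \<le> 2^j" by (metis of_nat_le_iff of_nat_numeral of_nat_power)
next
  have up: "h * real (k j) / 2^j \<le> t" for j
  proof -
    have x0: "0 \<le> t * 2^j / h" using h t by simp
    have "real (k j) \<le> t * 2^j / h" using x0 by (simp add: k_def)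
    then have "h * real (k j) \<le> t * 2^j" using h by (simp add: le_divide_eq mult.commute)
    then show ?thesis by (simp add: divide_le_eq)
  qed
  have lo: "t - h / 2^j \<le> h * real (k j) / 2^j" for j
  proof -
    have x0: "0 \<le> t * 2^j / h" using h t by simp
    have "t * 2^j / h - 1 \<le> real (k j)" using x0 by (simp add: k_def)
    then have "h * (t * 2^j / h - 1) \<le> h * real (k j)" using h by (intro mult_left_mono) auto
    then have "t * 2^j - h \<le> h * real (k j)" using h by (simp add: algebra_simps)
    then have "(t * 2^j - h) / 2^j \<le> h * real (k j) / 2^j" by (simp add: divide_right_mono)
    moreover have "(t * 2^j - h) / 2^j = t - h / 2^j" by (simp add: field_simps)
    ultimately show ?thesis by simp
  qed
  have "(\<lambda>j::nat. h * inverse (2^j)) \<longlonglongrightarrow> h * 0"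
    by (intro tendsto_intros LIMSEQ_inverse_realpow_zero) simp
  then have "(\<lambda>j. t - h / 2^j) \<longlonglongrightarrow> t - h * 0"
    by (intro tendsto_intros) (simp add: divide_inverse)
  then have lim: "(\<lambda>j::nat. t - h / 2^j) \<longlonglongrightarrow> t" by simp
  show "(\<lambda>j. h * real (k j) / 2^j) \<longlonglongrightarrow> t"
    by (rule tendsto_sandwich[OF _ _ lim tendsto_const]) (use up lo in auto)
qed

lemma bm_sup:
  assumes P: "prob_space M" and filt: "filtration M F" and bm: "brownian_motion_from M F B u"
    and h: "0 < h" and b: "0 \<le> b"
  shows "\<exists>N\<in>sets M. measure M N \<le> 4 * exp (- (b^2) / (2 * h)) \<and>
     (AE \<omega> in M. \<omega> \<notin> N \<longrightarrow> (\<forall>t\<in>{0..h}. \<bar>B t \<omega> - u\<bar> \<le> b))"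
proof -
  interpret prob_space M by (rule P)
  define A where "A j = (\<Union>k\<in>{..(2::nat)^j}. {\<omega>\<in>space M. \<bar>B (h * real k / 2^j) \<omega> - B 0 \<omega>\<bar> > b})" for j :: nat
  have measB: "B s \<in> borel_measurable M" if "0 \<le> s" for s using bm_measM[OF filt bm that] .
  have AM: "A j \<in> sets M" for j
  proof -
    have "{\<omega>\<in>space M. \<bar>B (h * real k / 2^j) \<omega> - B 0 \<omega>\<bar> > b} \<in> sets M" for k :: nat
    proof -
      have [measurable]: "B (h * real k / 2^j) \<in> borel_measurable M" using h by (intro measB) simp
      have [measurable]: "B 0 \<in> borel_measurable M" by (intro measB) simp
      show ?thesis by measurable
    qed
    then show ?thesis unfolding A_def by (intro sets.finite_UN) auto
  qed
  have Aeq: "A j = {\<omega>\<in>space M. \<exists>k\<le>(2::nat)^j. \<bar>B (h * real k / 2^j) \<omega> - B 0 \<omega>\<bar> > b}" for j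
    by (auto simp: A_def)
  have Ainc: "incseq A"
  proof (rule incseq_SucI)
    fix j
    show "A j \<subseteq> A (Suc j)"
    proof
      fix \<omega> assume "\<omega> \<in> A j"
      then obtain k where k: "k \<le> (2::nat)^j" "\<omega> \<in> space M" "\<bar>B (h * real k / 2^j) \<omega> - B 0 \<omega>\<bar> > b"
        by (auto simp: A_def)
      have "h * real (2*k) / 2^Suc j = h * real k / 2^j" by simp
      moreover have "2 * k \<le> (2::nat)^Suc j" using k(1) by simp
      ultimately show "\<omega> \<in> A (Suc j)" using k unfolding A_def
        by (intro UN_I[of "2*k"]) auto
    qed
  qed
  have lim: "(\<lambda>j. measure M (A j)) \<longlonglongrightarrow> measure M (\<Union>j. A j)"
    by (rule Lim_measure_incseq) (use AM Ainc in auto)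
  have "measure M (\<Union>j. A j) \<le> 4 * exp (- (b^2) / (2 * h))"
    by (rule LIMSEQ_le_const2[OF lim]) (use bm_grid[OF P filt bm h b] Aeq in auto)
  moreover have "(\<Union>j. A j) \<in> sets M" using AM by auto
  moreover have "AE \<omega> in M. \<omega> \<notin> (\<Union>j. A j) \<longrightarrow> (\<forall>t\<in>{0..h}. \<bar>B t \<omega> - u\<bar> \<le> b)"
  proof -
    have ae1: "AE \<omega> in M. B 0 \<omega> = u" and ae2: "AE \<omega> in M. continuous_on {0..} (\<lambda>t. B t \<omega>)"
      using bm by (auto simp: brownian_motion_from_def)
    show ?thesis using ae1 ae2 AE_space
    proof eventually_elim
      case (elim \<omega>)
      show ?case
      proof (intro impI ballI)
        fix t assume nA: "\<omega> \<notin> (\<Union>j. A j)" and t: "t \<in> {0..h}"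
        show "\<bar>B t \<omega> - u\<bar> \<le> b"
        proof -
          have True: "\<omega> \<in> space M" using elim(3) .
          define k where "k j = nat \<lfloor>t * 2^j / h\<rfloor>" for j :: nat
          have kle: "k j \<le> 2^j" for j using dyadic_approx(1)[OF h, of t] t by (auto simp: k_def)
          have klim: "(\<lambda>j. h * real (k j) / 2^j) \<longlonglongrightarrow> t" using dyadic_approx(2)[OF h, of t] t by (auto simp: k_def)
          have cont: "(\<lambda>j. B (h * real (k j) / 2^j) \<omega>) \<longlonglongrightarrow> B t \<omega>"
            by (rule continuous_on_tendsto_compose[OF elim(2) klim]) (use t h in auto)
          have "\<bar>B (h * real (k j) / 2^j) \<omega> - u\<bar> \<le> b" for j
            using nA True kle[of j] elim(1) unfolding A_def by fastforce
          moreover have "(\<lambda>j. \<bar>B (h * real (k j) / 2^j) \<omega> - u\<bar>) \<longlonglongrightarrow> \<bar>B t \<omega> - u\<bar>"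
            by (intro tendsto_intros cont)
          ultimately show ?thesis
            by (intro LIMSEQ_le_const2) auto
        qed
      qed
    qed
  qed
  ultimately show ?thesis by blast
qed



lemma grid_bound:
  fixes Z :: "real \<Rightarrow> real" and N :: nat
  assumes mono: "mono Z" and N: "0 < N" and u: "0 \<le> u" "u \<le> 1"
    and hyp: "\<And>k. k \<le> N \<Longrightarrow> \<bar>Z (real k / real N) - real k / real N\<bar> \<le> B"
  shows "\<bar>Z u - u\<bar> \<le> B + 1 / real N"
proof -
  define x where "x = u * real N"
  have x0: "0 \<le> x" and xN: "x \<le> real N" using u N by (auto simp: x_def mult_left_le_one_le)
  define k1 where "k1 = nat \<lfloor>x\<rfloor>"
  define k2 where "k2 = nat \<lceil>x\<rceil>"
  have k1x: "real k1 \<le> x" "x < real k1 + 1" using x0 by (auto simp: k1_def)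
  have k2x: "x \<le> real k2" "real k2 < x + 1" using x0 by (auto simp: k2_def) (use ceiling_correct[of x] in linarith)
  have k2N: "k2 \<le> N" using xN x0 unfolding k2_def
    by (metis ceiling_le_iff nat_le_iff of_int_of_nat_eq)
  have k1N: "k1 \<le> N" using k1x(1) k2x(1) k2N by linarith
  have Npos: "0 < real N" using N by simp
  have l1: "real k1 / real N \<le> u" using k1x(1) Npos by (simp add: x_def divide_le_eq)
  have l2: "u \<le> real k2 / real N" using k2x(1) Npos by (simp add: x_def le_divide_eq)
  have l3: "u - real k1 / real N \<le> 1 / real N"
  proof -
    have "u * real N - real k1 \<le> 1" using k1x(2) by (simp add: x_def)
    then have "(u * real N - real k1) / real N \<le> 1 / real N" using Npos by (simp add: divide_right_mono)
    then show ?thesis using Npos by (simp add: field_simps)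
  qed
  have l4: "real k2 / real N - u \<le> 1 / real N"
  proof -
    have "real k2 - u * real N \<le> 1" using k2x(2) by (simp add: x_def)
    then have "(real k2 - u * real N) / real N \<le> 1 / real N" using Npos by (simp add: divide_right_mono)
    then show ?thesis using Npos by (simp add: field_simps)
  qed
  have m1: "Z (real k1 / real N) \<le> Z u" using mono l1 by (simp add: monoD)
  have m2: "Z u \<le> Z (real k2 / real N)" using mono l2 by (simp add: monoD)
  have h1: "\<bar>Z (real k1 / real N) - real k1 / real N\<bar> \<le> B" using hyp k1N by simp
  have h2: "\<bar>Z (real k2 / real N) - real k2 / real N\<bar> \<le> B" using hyp k2N by simp
  show ?thesis using m1 m2 h1 h2 l3 l4 by (simp add: abs_le_iff)
qed

definition NN :: "real \<Rightarrow> nat \<Rightarrow> nat" where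
  "NN L m = nat \<lceil>exp (real m * L / 2)\<rceil>"

definition BB :: "real \<Rightarrow> nat \<Rightarrow> real" where
  "BB L m = exp L * sqrt (exp (- ((real m + 1) * L)) * real m * L)"

lemma NN_ge: "0 \<le> L \<Longrightarrow> exp (real m * L / 2) \<le> real (NN L m)"
  unfolding NN_def using real_nat_ceiling_ge by blast

lemma NN_pos: "0 \<le> L \<Longrightarrow> 0 < NN L m"
proof -
  assume "0 \<le> L"
  then have "1 \<le> exp (real m * L / 2)" by simp
  with NN_ge[OF \<open>0 \<le> L\<close>, of m] show ?thesis by linarith
qed

lemma det:
  fixes Z :: "real \<Rightarrow> real \<Rightarrow> real" and L \<delta> :: real and m0 :: nat
  assumes L: "0 < L" and \<delta>: "0 < \<delta>" and mono: "\<And>t. 0 \<le> t \<Longrightarrow> mono (\<lambda>u. Z u t)"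
    and hyp: "\<And>m k t. m0 \<le> m \<Longrightarrow> k \<le> NN L m \<Longrightarrow> 0 \<le> t \<Longrightarrow> t \<le> exp (- (real m * L)) \<Longrightarrow>
       \<bar>Z (real k / real (NN L m)) t - real k / real (NN L m)\<bar> \<le> BB L m"
  shows "eventually (\<lambda>t. \<forall>u\<in>{0..1}. \<bar>Z u t - u\<bar> / sqrt (t * ln (1 / t)) \<le> exp L + \<delta>) (at_right 0)"
proof -
  define m1 where "m1 = max (max m0 1) (nat \<lceil>exp L / (\<delta>^2 * L)\<rceil>)"
  have m1a: "m0 \<le> m1" "1 \<le> m1" by (auto simp: m1_def)
  have m1b: "exp L / (\<delta>^2 * L) \<le> real m1"
  proof -
    have "exp L / (\<delta>^2 * L) \<le> real (nat \<lceil>exp L / (\<delta>^2 * L)\<rceil>)" by (rule real_nat_ceiling_ge)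
    moreover have "nat \<lceil>exp L / (\<delta>^2 * L)\<rceil> \<le> m1" by (simp add: m1_def)
    ultimately show ?thesis by (meson of_nat_le_iff order.trans)
  qed
  show ?thesis
    unfolding eventually_at_right_field
  proof (intro exI[of _ "exp (- (real m1 * L))"] conjI allI impI)
    show "0 < exp (- (real m1 * L))" by simp
    fix y :: real assume y0: "0 < y" and y1: "y < exp (- (real m1 * L))"
    define x where "x = (- ln y) / L"
    have "ln y < ln (exp (- (real m1 * L)))" using y0 y1 by (subst ln_less_cancel_iff) auto
    then have lny: "ln y < - (real m1 * L)" by simp
    have xm1: "real m1 < x" using lny L by (simp add: x_def field_simps)
    define m where "m = nat \<lfloor>x\<rfloor>"
    have x0: "0 \<le> x" using xm1 by simp
    have mx: "real m \<le> x" "x < real m + 1" using x0 by (auto simp: m_def)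
    have "int m1 \<le> \<lfloor>x\<rfloor>" using xm1 by (simp add: le_floor_iff)
    then have mm1: "m1 \<le> m" unfolding m_def by linarith
    have m1': "1 \<le> m" using mm1 m1a by simp
    have lo1: "real m * L \<le> - ln y" using mx(1) L unfolding x_def by (simp only: pos_le_divide_eq)
    have lo2: "- ln y < (real m + 1) * L" using mx(2) L unfolding x_def by (simp only: pos_divide_less_eq)
    have "exp (ln y) \<le> exp (- (real m * L))" using lo1 by simp
    then have yup: "y \<le> exp (- (real m * L))" using y0 by simp
    have "exp (- ((real m + 1) * L)) < exp (ln y)" using lo2 by simp
    then have ylo: "exp (- ((real m + 1) * L)) < y" using y0 by simp
    define s where "s = sqrt (exp (- ((real m + 1) * L)) * real m * L)"
    have spos: "0 < s" unfolding s_def using m1' L by simp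
    have BBs: "BB L m = exp L * s" by (simp add: BB_def s_def)
    have lnpos: "real m * L \<le> ln (1 / y)" using lo1 y0 by (simp add: ln_div)
    have "s^2 = exp (- ((real m + 1) * L)) * (real m * L)" unfolding s_def using L by simp
    also have "\<dots> \<le> y * ln (1 / y)"
      using ylo lnpos L y0 by (intro mult_mono) auto
    finally have ss: "s^2 \<le> y * ln (1 / y)" .
    have sle: "s \<le> sqrt (y * ln (1 / y))"
      using ss spos by (metis real_le_rsqrt)
    have invN: "1 / real (NN L m) \<le> exp (- (real m * L / 2))"
    proof -
      have "exp (real m * L / 2) \<le> real (NN L m)" using NN_ge L by simp
      then have "1 / real (NN L m) \<le> 1 / exp (real m * L / 2)"
        using NN_pos[of L m] L by (intro divide_left_mono) auto
      then show ?thesis by (simp add: exp_minus inverse_eq_divide)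
    qed
    have key: "exp (- (real m * L / 2)) \<le> \<delta> * s"
    proof (rule power2_le_imp_le)
      show "0 \<le> \<delta> * s" using \<delta> spos by simp
      have "(exp (- (real m * L / 2)))^2 = exp (- (real m * L))"
        by (simp add: power2_eq_square exp_add[symmetric])
      also have "\<dots> = exp (- (real m * L)) * 1" by simp
      also have "\<dots> \<le> exp (- (real m * L)) * (\<delta>^2 * exp (- L) * real m * L)"
      proof (rule mult_left_mono)
        have "exp L / (\<delta>^2 * L) \<le> real m" using m1b mm1 by linarith
        then have "exp L \<le> real m * (\<delta>^2 * L)" using \<delta> L by (simp add: divide_le_eq)
        then have "exp L * exp (- L) \<le> real m * (\<delta>^2 * L) * exp (- L)" by (intro mult_right_mono) auto
        then show "1 \<le> \<delta>^2 * exp (- L) * real m * L" by (simp add: exp_minus field_simps)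
      qed simp
      also have "\<dots> = (\<delta> * s)^2"
        unfolding s_def using L
        by (simp add: power_mult_distrib exp_add[symmetric] algebra_simps)
      finally show "(exp (- (real m * L / 2)))^2 \<le> (\<delta> * s)^2" .
    qed
    show "\<forall>u\<in>{0..1}. \<bar>Z u y - u\<bar> / sqrt (y * ln (1 / y)) \<le> exp L + \<delta>"
    proof
      fix u :: real assume u: "u \<in> {0..1}"
      have gb: "\<bar>Z u y - u\<bar> \<le> BB L m + 1 / real (NN L m)"
      proof (rule grid_bound[where Z="\<lambda>u. Z u y"])
        show "mono (\<lambda>u. Z u y)" using mono y0 by simp
        show "0 < NN L m" using NN_pos L by simp
        show "0 \<le> u" "u \<le> 1" using u by auto
        show "\<bar>Z (real k / real (NN L m)) y - real k / real (NN L m)\<bar> \<le> BB L m" if "k \<le> NN L m" for k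
          using hyp[of m k y] that mm1 m1a yup y0 by linarith
      qed
      have "\<bar>Z u y - u\<bar> \<le> (exp L + \<delta>) * s"
        using gb invN key BBs by (simp add: algebra_simps)
      also have "\<dots> \<le> (exp L + \<delta>) * sqrt (y * ln (1 / y))"
        using sle \<delta> by (intro mult_left_mono) auto
      finally have "\<bar>Z u y - u\<bar> \<le> (exp L + \<delta>) * sqrt (y * ln (1 / y))" .
      moreover have "0 < sqrt (y * ln (1 / y))" using sle spos by linarith
      ultimately show "\<bar>Z u y - u\<bar> / sqrt (y * ln (1 / y)) \<le> exp L + \<delta>"
        by (simp add: divide_le_eq)
    qed
  qed
qed



lemma NN_le: "0 \<le> L \<Longrightarrow> real (NN L m) + 1 \<le> 3 * exp (real m * L / 2)"
proof -
  assume L: "0 \<le> L"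
  have "real (NN L m) < exp (real m * L / 2) + 1"
    unfolding NN_def using ceiling_correct[of "exp (real m * L / 2)"]
    by (simp add: of_nat_nat)
  moreover have "1 \<le> exp (real m * L / 2)" using L by simp
  ultimately show ?thesis by linarith
qed

lemma BB_exp:
  assumes L: "0 < L"
  shows "exp (- ((BB L m)^2) / (2 * exp (- (real m * L)))) = exp (- (exp L * real m * L / 2))"
proof -
  define A where "A = exp (- ((real m + 1) * L)) * real m * L"
  have A0: "0 \<le> A" unfolding A_def using L by simp
  have "(BB L m)^2 = (exp L)^2 * (sqrt A)^2" unfolding BB_def A_def by (simp only: power_mult_distrib)
  also have "(sqrt A)^2 = A" using A0 by simp
  finally have b2: "(BB L m)^2 = (exp L)^2 * A" .
  have "(exp L)^2 * exp (- ((real m + 1) * L)) = exp (L + L + - ((real m + 1) * L))"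
    by (simp only: power2_eq_square exp_add)
  also have "L + L + - ((real m + 1) * L) = L + - (real m * L)" by (simp add: algebra_simps)
  also have "exp (L + - (real m * L)) = exp (- (real m * L)) * exp L" by (simp only: exp_add mult.commute)
  finally have e: "(exp L)^2 * exp (- ((real m + 1) * L)) = exp (- (real m * L)) * exp L" .
  have "(BB L m)^2 = exp (- (real m * L)) * (exp L * real m * L)"
    unfolding b2 A_def using e by (simp only: mult.assoc[symmetric])
  then have "(BB L m)^2 / (2 * exp (- (real m * L))) = (exp (- (real m * L)) * (exp L * real m * L)) / (exp (- (real m * L)) * 2)"
    by (simp only: mult.commute)
  also have "\<dots> = exp L * real m * L / 2"
    by (rule nonzero_mult_divide_mult_cancel_left) simp
  finally have q: "(BB L m)^2 / (2 * exp (- (real m * L))) = exp L * real m * L / 2" .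
  show ?thesis unfolding minus_divide_left[symmetric] q ..
qed

lemma prob_part:
  fixes X :: "real \<Rightarrow> real \<Rightarrow> 'a \<Rightarrow> real"
  assumes P: "prob_space M" and filt: "filtration M F"
    and bmall: "\<And>u. brownian_motion_from M F (X u) u" and L: "0 < L"
  shows "AE \<omega> in M. \<exists>m0. \<forall>m k t. m0 \<le> m \<longrightarrow> k \<le> NN L m \<longrightarrow> 0 \<le> t \<longrightarrow> t \<le> exp (- (real m * L)) \<longrightarrow>
      \<bar>X (real k / real (NN L m)) t \<omega> - real k / real (NN L m)\<bar> \<le> BB L m"
proof -
  interpret prob_space M by (rule P)
  define g where "g m k = real k / real (NN L m)" for m k :: nat
  have BB0: "0 \<le> BB L m" for m unfolding BB_def using L by simp
  have ex: "\<exists>N\<in>sets M. measure M N \<le> 4 * exp (- ((BB L m)^2) / (2 * exp (- (real m * L)))) \<and>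
     (AE \<omega> in M. \<omega> \<notin> N \<longrightarrow> (\<forall>t\<in>{0..exp (- (real m * L))}. \<bar>X (g m k) t \<omega> - g m k\<bar> \<le> BB L m))" for m k
    by (rule bm_sup[OF P filt bmall]) (auto simp: BB0)
  define NS where "NS m k = (SOME N. N \<in> sets M \<and> measure M N \<le> 4 * exp (- ((BB L m)^2) / (2 * exp (- (real m * L)))) \<and>
     (AE \<omega> in M. \<omega> \<notin> N \<longrightarrow> (\<forall>t\<in>{0..exp (- (real m * L))}. \<bar>X (g m k) t \<omega> - g m k\<bar> \<le> BB L m)))" for m k
  have NS: "NS m k \<in> sets M \<and> measure M (NS m k) \<le> 4 * exp (- ((BB L m)^2) / (2 * exp (- (real m * L)))) \<and>
     (AE \<omega> in M. \<omega> \<notin> NS m k \<longrightarrow> (\<forall>t\<in>{0..exp (- (real m * L))}. \<bar>X (g m k) t \<omega> - g m k\<bar> \<le> BB L m))" for m k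
    unfolding NS_def using someI_ex[OF ex[of m k, unfolded Bex_def]] by blast
  define D where "D m = (\<Union>k\<in>{..NN L m}. NS m k)" for m
  have DM: "D m \<in> sets M" for m unfolding D_def using NS by auto
  define \<rho> where "\<rho> = exp ((1 - exp L) * L / 2)"
  have \<rho>0: "0 < \<rho>" and \<rho>1: "\<rho> < 1"
  proof -
    show "0 < \<rho>" by (simp add: \<rho>_def)
    have "1 < exp L" using L by simp
    then have "(1 - exp L) * L / 2 < 0" using L by (simp add: mult_neg_pos)
    then show "\<rho> < 1" by (simp add: \<rho>_def)
  qed
  have Dbound: "measure M (D m) \<le> 12 * \<rho>^m" for m
  proof -
    have "measure M (D m) \<le> (\<Sum>k\<in>{..NN L m}. measure M (NS m k))"
      unfolding D_def using NS by (intro measure_UNION_le) auto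
    also have "\<dots> \<le> (\<Sum>k\<in>{..NN L m}. 4 * exp (- (exp L * real m * L / 2)))"
    proof (rule sum_mono)
      fix k
      have "measure M (NS m k) \<le> 4 * exp (- ((BB L m)^2) / (2 * exp (- (real m * L))))" using NS by blast
      then show "measure M (NS m k) \<le> 4 * exp (- (exp L * real m * L / 2))" by (simp only: BB_exp[OF L])
    qed
    also have "\<dots> = (real (NN L m) + 1) * (4 * exp (- (exp L * real m * L / 2)))"
      by simp
    also have "\<dots> \<le> (3 * exp (real m * L / 2)) * (4 * exp (- (exp L * real m * L / 2)))"
      using NN_le[of L m] L by (intro mult_right_mono) auto
    also have "\<dots> = 12 * exp (real m * ((1 - exp L) * L / 2))"
      by (simp add: exp_add[symmetric] algebra_simps)
    also have "\<dots> = 12 * \<rho>^m"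
      unfolding \<rho>_def by (subst exp_of_nat_mult[symmetric]) simp
    finally show ?thesis .
  qed
  have summ: "summable (\<lambda>m. measure M (D m))"
  proof (rule summable_comparison_test')
    show "summable (\<lambda>m. 12 * \<rho>^m)" using \<rho>0 \<rho>1 by (intro summable_mult summable_geometric) auto
    show "norm (measure M (D m)) \<le> 12 * \<rho>^m" for m using Dbound[of m] by simp
  qed
  have bc: "AE \<omega> in M. eventually (\<lambda>m. \<omega> \<in> space M - D m) sequentially"
    by (rule borel_cantelli_AE1) (use DM summ in \<open>auto simp: less_top[symmetric]\<close>)
  have all: "AE \<omega> in M. \<forall>m k. \<omega> \<notin> NS m k \<longrightarrow> (\<forall>t\<in>{0..exp (- (real m * L))}. \<bar>X (g m k) t \<omega> - g m k\<bar> \<le> BB L m)"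
    using NS by (simp add: AE_all_countable)
  show ?thesis using bc all
  proof eventually_elim
    case (elim \<omega>)
    then obtain m0 where m0: "\<And>m. m \<ge> m0 \<Longrightarrow> \<omega> \<notin> D m" unfolding eventually_sequentially by blast
    show ?case
    proof (intro exI[of _ m0] allI impI)
      fix m k t assume a: "m0 \<le> m" "k \<le> NN L m" "0 \<le> t" "t \<le> exp (- (real m * L))"
      have "\<omega> \<notin> NS m k" using m0[OF a(1)] a(2) unfolding D_def by blast
      then have "\<forall>t\<in>{0..exp (- (real m * L))}. \<bar>X (g m k) t \<omega> - g m k\<bar> \<le> BB L m"
        using elim(2) by blast
      then show "\<bar>X (real k / real (NN L m)) t \<omega> - real k / real (NN L m)\<bar> \<le> BB L m"
        using a(3,4) unfolding g_def by simp
    qed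
  qed
qed



lemma per_L:
  fixes X :: "real \<Rightarrow> real \<Rightarrow> 'a \<Rightarrow> real"
  assumes P: "prob_space M" and H: "harris_point_motion M F \<phi> X" and L: "0 < L"
  shows "AE \<omega> in M. Limsup (at_right 0)
             (\<lambda>t. SUP u\<in>{0..1}. ereal (\<bar>X u t \<omega> - u\<bar> / sqrt (t * ln (1 / t)))) \<le> ereal (exp L + L)"
proof -
  have filt: "filtration M F" and bm: "\<And>u. brownian_motion_from M F (X u) u"
    and mono: "\<And>t \<omega>. 0 \<le> t \<Longrightarrow> \<omega> \<in> space M \<Longrightarrow> mono (\<lambda>u. X u t \<omega>)"
    using H by (auto simp: harris_point_motion_def)
  show ?thesis using prob_part[OF P filt bm L] AE_space
  proof eventually_elim
    case (elim \<omega>)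
    then obtain m0 where m0: "\<And>m k t. m0 \<le> m \<Longrightarrow> k \<le> NN L m \<Longrightarrow> 0 \<le> t \<Longrightarrow> t \<le> exp (- (real m * L)) \<Longrightarrow>
      \<bar>X (real k / real (NN L m)) t \<omega> - real k / real (NN L m)\<bar> \<le> BB L m" by blast
    have ev: "eventually (\<lambda>t. \<forall>u\<in>{0..1}. \<bar>X u t \<omega> - u\<bar> / sqrt (t * ln (1 / t)) \<le> exp L + L) (at_right 0)"
      by (rule det[where Z="\<lambda>u t. X u t \<omega>", OF L L]) (use mono elim(2) m0 in auto)
    show ?case
    proof (rule Limsup_bounded)
      show "eventually (\<lambda>t. (SUP u\<in>{0..1}. ereal (\<bar>X u t \<omega> - u\<bar> / sqrt (t * ln (1 / t)))) \<le> ereal (exp L + L)) (at_right 0)"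
        using ev by eventually_elim (auto intro!: SUP_least)
    qed
  qed
qed

theorem theorem5:
  fixes M :: "'a measure" and F :: "real \<Rightarrow> 'a measure"
    and \<phi> :: "real \<Rightarrow> real" and X :: "real \<Rightarrow> real \<Rightarrow> 'a \<Rightarrow> real"
  assumes "prob_space M"
    and "positive_definite \<phi>"
    and "\<phi> 0 = 1"
    and "\<And>x. x \<noteq> 0 \<Longrightarrow> \<bar>\<phi> x\<bar> < 1"
    and "harris_point_motion M F \<phi> X"
  shows "AE \<omega> in M.
           Limsup (at_right 0)
             (\<lambda>t. SUP u\<in>{0..1}. ereal (\<bar>X u t \<omega> - u\<bar> / sqrt (t * ln (1 / t)))) \<le> 1"
proof -
  define c where "c n = inverse (real (Suc n))" for n
  have "AE \<omega> in M. \<forall>n. Limsup (at_right 0)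
             (\<lambda>t. SUP u\<in>{0..1}. ereal (\<bar>X u t \<omega> - u\<bar> / sqrt (t * ln (1 / t)))) \<le> ereal (exp (c n) + c n)"
    unfolding AE_all_countable using per_L[OF assms(1) assms(5)] by (auto simp: c_def)
  then show ?thesis
  proof eventually_elim
    case (elim \<omega>)
    have lim: "(\<lambda>n. ereal (exp (c n) + c n)) \<longlonglongrightarrow> ereal (exp 0 + 0)"
      unfolding c_def by (intro tendsto_intros LIMSEQ_inverse_real_of_nat)
    show ?case
      using LIMSEQ_le_const[OF lim, of "Limsup (at_right 0)
             (\<lambda>t. SUP u\<in>{0..1}. ereal (\<bar>X u t \<omega> - u\<bar> / sqrt (t * ln (1 / t))))"] elim
      by (simp add: one_ereal_def)
  qed
qed

end
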